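(* Let $E$ be a finite set, $S\subseteq 2^E$ a powerful set and $e\in E$. Then $e$ is a coloop of $S$ if and only if $\{e\}\in S$.
   Context: A set $S\subseteq 2^E$ is powerful if for every $X\subseteq E$ the number of members of $S$ that are subsets of $X$ is a power of $2$. An element $e\in E$ is a coloop of $S$ if there exists $T\subseteq 2^{E\setminus\{e\}}$ such that $S=\{X,\ X\cup\{e\} : X\in T\}$. *)

theory Defs
  imports Main
begin

definition powerful :: "'a set \<Rightarrow> 'a set set \<Rightarrow> bool" where
  "powerful E S \<longleftrightarrow> S \<subseteq> Pow E \<and>
     (\<forall>X. X \<subseteq> E \<longrightarrow> (\<exists>k::nat. card {A \<in> S. A \<subseteq> X} = 2 ^ k))"

definition coloop :: "'a set \<Rightarrow> 'a set set \<Rightarrow> 'a \<Rightarrow> bool" where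
  "coloop E S e \<longleftrightarrow> (\<exists>T. T \<subseteq> Pow (E - {e}) \<and> S = T \<union> (insert e) ` T)"

end

theory Submission
  imports Defs
begin

lemma pow2_odd: "(2::nat)^k = 2*p+1 \<Longrightarrow> p = 0"
  by (cases k) (auto, presburger)

theorem theorem3:
  fixes E :: "'a set" and S :: "'a set set" and e :: 'a
  assumes "finite E" and "powerful E S" and "e \<in> E"
  shows "coloop E S e \<longleftrightarrow> {e} \<in> S"
proof -
  have SE: "S \<subseteq> Pow E" and pw: "\<And>X. X \<subseteq> E \<Longrightarrow> \<exists>k::nat. card {A\<in>S. A\<subseteq>X} = 2^k"
    using assms(2) unfolding powerful_def by auto
  have finS: "finite S" using SE assms(1) by (meson finite_Pow_iff rev_finite_subset)
  have empty: "{} \<in> S"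
  proof -
    obtain k::nat where "card {A\<in>S. A \<subseteq> {}} = 2^k" using pw by blast
    hence "{A\<in>S. A\<subseteq>{}} \<noteq> {}" by (metis card.empty power_not_zero zero_neq_numeral)
    thus ?thesis by auto
  qed
  show ?thesis
  proof
    assume "coloop E S e"
    then obtain T where T: "T \<subseteq> Pow (E-{e})" "S = T \<union> insert e ` T" unfolding coloop_def by blast
    have "{} \<in> T" using empty T by auto
    thus "{e} \<in> S" using T by auto
  next
    assume e1: "{e} \<in> S"
    have key: "X \<subseteq> E - {e} \<Longrightarrow> (X \<in> S \<longleftrightarrow> insert e X \<in> S)" for X
    proof (induction "card X" arbitrary: X rule: less_induct)
      case less
      note IH = less.hyps and X = less.prems
      have finX: "finite X" using X assms(1) by (meson finite_Diff rev_finite_subset)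
      have eX: "e \<notin> X" using X by auto
      define P where "P = {A\<in>S. A \<subseteq> X}"
      define Q where "Q = {A\<in>S. e\<in>A \<and> A \<subseteq> insert e X}"
      have f: "{A\<in>S. A \<subseteq> insert e X} = P \<union> Q" by (auto simp: P_def Q_def)
      have disj: "P \<inter> Q = {}" using eX by (auto simp: P_def Q_def)
      have finP: "finite P" "finite Q" using finS by (auto simp: P_def Q_def)
      have im: "insert e ` (P - {X}) = Q - {insert e X}"
      proof
        show "insert e ` (P - {X}) \<subseteq> Q - {insert e X}"
        proof
          fix B assume "B \<in> insert e ` (P - {X})"
          then obtain A where A: "A \<in> P" "A \<noteq> X" "B = insert e A" by auto
          have "A \<subset> X" using A by (auto simp: P_def)
          hence "card A < card X" using finX by (simp add: psubset_card_mono)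
          moreover have "A \<subseteq> E - {e}" using \<open>A \<subset> X\<close> X by auto
          ultimately have "insert e A \<in> S" using IH A by (auto simp: P_def)
          moreover have "e \<notin> A" using \<open>A \<subset> X\<close> eX by auto
          ultimately show "B \<in> Q - {insert e X}" using A eX \<open>A \<subset> X\<close>
            by (auto simp: Q_def)
        qed
      next
        show "Q - {insert e X} \<subseteq> insert e ` (P - {X})"
        proof
          fix B assume B: "B \<in> Q - {insert e X}"
          have Bd: "B = insert e (B - {e})" using B by (auto simp: Q_def)
          have "B - {e} \<subset> X" using B eX by (auto simp: Q_def)
          hence "card (B - {e}) < card X" using finX by (simp add: psubset_card_mono)
          moreover have "B - {e} \<subseteq> E - {e}" using \<open>B - {e} \<subset> X\<close> X by auto
          ultimately have "B - {e} \<in> S" using IH B Bd by (auto simp: Q_def)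
          hence "B - {e} \<in> P - {X}" using \<open>B - {e} \<subset> X\<close> by (auto simp: P_def)
          thus "B \<in> insert e ` (P - {X})" using Bd by blast
        qed
      qed
      have inj: "inj_on (insert e) (P - {X})"
      proof (rule inj_onI)
        fix x y assume xy: "x \<in> P - {X}" "y \<in> P - {X}" "insert e x = insert e y"
        have "e \<notin> x" "e \<notin> y" using xy eX by (auto simp: P_def)
        thus "x = y" using xy(3) by (metis Diff_insert_absorb)
      qed
      define p where "p = card (P - {X})"
      have cQ': "card (Q - {insert e X}) = p"
        using im inj card_image p_def by metis
      have cP: "card P = p + (if X \<in> S then 1 else 0)"
      proof (cases "X \<in> S")
        case True
        hence "X \<in> P" by (auto simp: P_def)
        hence "card P = Suc (card (P - {X}))" using finP(1) by (rule card.remove[rotated])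
        thus ?thesis using True p_def by simp
      next
        case False
        hence "P - {X} = P" by (auto simp: P_def)
        thus ?thesis using False p_def by simp
      qed
      have cQ: "card Q = p + (if insert e X \<in> S then 1 else 0)"
      proof (cases "insert e X \<in> S")
        case True
        hence "insert e X \<in> Q" by (auto simp: Q_def)
        hence "card Q = Suc (card (Q - {insert e X}))" using finP(2) by (rule card.remove[rotated])
        thus ?thesis using True cQ' by simp
      next
        case False
        hence "Q - {insert e X} = Q" by (auto simp: Q_def)
        thus ?thesis using False cQ' by simp
      qed
      obtain k::nat where k: "card (P \<union> Q) = 2^k"
        using pw[of "insert e X"] f X assms(3) by auto
      have cU: "card (P \<union> Q) = card P + card Q" using finP disj by (simp add: card_Un_disjoint)
      have emP: "{} \<in> P" using empty by (auto simp: P_def)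
      show ?case
      proof (rule ccontr)
        assume ne: "\<not> (X \<in> S \<longleftrightarrow> insert e X \<in> S)"
        hence "(2::nat)^k = 2*p+1" using k cU cP cQ by auto
        hence "p = 0" by (rule pow2_odd)
        hence "P - {X} = {}" using finP p_def by simp
        hence "X = {}" using emP by auto
        thus False using ne e1 empty by auto
      qed
    qed
    define T where "T = {A\<in>S. e \<notin> A}"
    have "T \<subseteq> Pow (E - {e})" using SE by (auto simp: T_def)
    moreover have "S = T \<union> insert e ` T"
    proof
      show "S \<subseteq> T \<union> insert e ` T"
      proof
        fix A assume A: "A \<in> S"
        show "A \<in> T \<union> insert e ` T"
        proof (cases "e \<in> A")
          case True
          have "A - {e} \<subseteq> E - {e}" using A SE by auto
          hence "A - {e} \<in> S" using key True A by (metis insert_Diff)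
          hence "A - {e} \<in> T" by (auto simp: T_def)
          thus ?thesis using True by (metis UnI2 imageI insert_Diff)
        qed (use A in \<open>auto simp: T_def\<close>)
      qed
    next
      show "T \<union> insert e ` T \<subseteq> S"
        using key SE by (auto simp: T_def)
    qed
    ultimately show "coloop E S e" unfolding coloop_def by blast
  qed
qed

end
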